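(* Let $(u,\mathfrak g)$ be a 6-dimensional Lie algebra with an adapted coframe defining an $SO(3)$-structure with invariant intrinsic torsion $p$, and let $g=\begin{pmatrix} x & y \\ z & w \end{pmatrix}\in GL(2,\mathbb R)$. Then $(ug^{-1},\mathfrak g)$ is half-flat if and only if \[ p(y,-x) - y\frac{\partial p}{\partial u_1}(w,-z)+x\frac{\partial p}{\partial u_2}(w,-z)=0. \] Moreover, it is Hermitian if and only if it is half-flat and \[ p(w,-z)-w\frac{\partial p}{\partial u_1}(y,-x)+z\frac{\partial p}{\partial u_2}(y,-x)=0. \]
   Context: For a Lie algebra $\mathfrak g$ with a frame $u\colon\mathbb R^6\to\mathfrak g$, i.e. coframe $e^1,\dots,e^6$ of $\mathfrak g^*$, let $\sigma=e^{12}+e^{34}+e^{56}$, $\eta^\theta=(\cos\theta\, e^1+\sin\theta\, e^2)\wedge(\cos\theta\, e^3+\sin\theta\, e^4)\wedge(\cos\theta\, e^5+\sin\theta\, e^6)$, $\eta_0=\eta^0,\eta_1=\eta^{2\pi/3},\eta_2=\eta^{-2\pi/3}$ (defining an $SO(3)$-structure), $\gamma=\tfrac43(\eta_0+\eta_1+\eta_2)$, $\hat\gamma=J\gamma$. The $SO(3)$-structure has invariant intrinsic torsion when there are constants $\lambda_1,\dots,\lambda_4$ with $d\eta_0=-\tfrac12\lambda_4\sigma^2$, $d\eta_1=\tfrac1{16}(3\sqrt3\lambda_1+3\lambda_2+\sqrt3\lambda_3+\lambda_4)\sigma^2$, $d\eta_2=-\tfrac1{16}(3\sqrt3\lambda_1-3\lambda_2+\sqrt3\lambda_3-\lambda_4)\sigma^2$,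 $d\hat\gamma=\tfrac12(\lambda_3-\lambda_1)\sigma^2$, $d\sigma=\tfrac34(\lambda_1-\lambda_3)\gamma+\tfrac34(\lambda_2-\lambda_4)\hat\gamma+\tfrac14(\lambda_2+3\lambda_4)(e^{235}+e^{145}+e^{136}+3e^{246})+\tfrac14(3\lambda_1+\lambda_3)(e^{245}+e^{146}+e^{236}+3e^{135})$ (and the remaining intrinsic torsion component vanishes); the intrinsic torsion is the cubic $p=\lambda_1u_1^3+\lambda_2u_1^2u_2+\lambda_3u_1u_2^2+\lambda_4u_2^3$. The structure is half-flat iff $\lambda_2=\lambda_4$, and Hermitian iff half-flat and $\lambda_1=\lambda_3$. The new frame $ug^{-1}$ corresponds to the coframe $xe^1+ye^2,\ ze^1+we^2,\ xe^3+ye^4,\ ze^3+we^4,\ xe^5+ye^6,\ ze^5+we^6$. *)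

theory Defs
  imports "HOL-Analysis.Derivative" "HOL-Combinatorics.Permutations"
begin

text \<open>
The 6-dimensional Lie algebra g is identified, via a reference basis
e_0,...,e_5 (indices 0..5, i.e. e_1..e_6 of the paper shifted by one), with R^6;
its bracket is given by structure constants c:  [e_i,e_j] = sum_m c i j m e_m.
A k-form is represented by its values on k-tuples of reference basis vectors:
a function  nat list => real  (only lists of length k with entries < 6 matter).
A 1-form (covector) is a function  nat => real  (its values on e_0..e_5).
Wedge products use the determinant convention (e^{12}(e_1,e_2) = 1).
\<close>

definition lie_algebra6 :: "(nat \<Rightarrow> nat \<Rightarrow> nat \<Rightarrow> real) \<Rightarrow> bool" where
  "lie_algebra6 c \<longleftrightarrow>
     (\<forall>i<6. \<forall>j<6. \<forall>m<6. c i j m = - c j i m) \<and>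
     (\<forall>i<6. \<forall>j<6. \<forall>k<6. \<forall>l<6.
        (\<Sum>m<6. c i j m * c m k l + c j k m * c m i l + c k i m * c m j l) = 0)"

definition form_eq :: "nat \<Rightarrow> (nat list \<Rightarrow> real) \<Rightarrow> (nat list \<Rightarrow> real) \<Rightarrow> bool" where
  "form_eq k \<alpha> \<beta> \<longleftrightarrow> (\<forall>js. length js = k \<and> set js \<subseteq> {..<6} \<longrightarrow> \<alpha> js = \<beta> js)"

definition wedges :: "(nat \<Rightarrow> real) list \<Rightarrow> nat list \<Rightarrow> real" where
  "wedges ths js = (\<Sum>\<pi> | \<pi> permutes {..<length ths}.
      of_int (sign \<pi>) * (\<Prod>a<length ths. (ths ! a) (js ! \<pi> a)))"

definition wedge :: "nat \<Rightarrow> nat \<Rightarrow> (nat list \<Rightarrow> real) \<Rightarrow> (nat list \<Rightarrow> real) \<Rightarrow> nat list \<Rightarrow> real" where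
  "wedge p q \<alpha> \<beta> js = (\<Sum>\<pi> | \<pi> permutes {..<p+q}.
      of_int (sign \<pi>) * \<alpha> (map (\<lambda>i. js ! \<pi> i) [0..<p]) * \<beta> (map (\<lambda>i. js ! \<pi> i) [p..<p+q]))
      / (fact p * fact q)"

text \<open>Exterior derivative (Chevalley--Eilenberg differential) of a form on the Lie
algebra: d alpha(X_0..X_k) = sum_{a<b} (-1)^(a+b) alpha([X_a,X_b], X_0..^a..^b..X_k).\<close>
definition del2 :: "nat \<Rightarrow> nat \<Rightarrow> nat list \<Rightarrow> nat list" where
  "del2 a b js = map (\<lambda>i. js ! i) (filter (\<lambda>i. i \<noteq> a \<and> i \<noteq> b) [0..<length js])"

definition dform :: "(nat \<Rightarrow> nat \<Rightarrow> nat \<Rightarrow> real) \<Rightarrow> (nat list \<Rightarrow> real) \<Rightarrow> nat list \<Rightarrow> real" where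
  "dform c \<alpha> js = (\<Sum>a<length js. \<Sum>b\<in>{a<..<length js}.
      (-1) ^ (a + b) * (\<Sum>m<6. c (js ! a) (js ! b) m * \<alpha> (m # del2 a b js)))"

text \<open>An (adapted) coframe is given by six 1-forms th 0, ..., th 5
(th k corresponds to e^{k+1} of the paper).\<close>

definition sigma_f :: "(nat \<Rightarrow> nat \<Rightarrow> real) \<Rightarrow> nat list \<Rightarrow> real" where
  "sigma_f th js = wedges [th 0, th 1] js + wedges [th 2, th 3] js + wedges [th 4, th 5] js"

definition sigma2_f :: "(nat \<Rightarrow> nat \<Rightarrow> real) \<Rightarrow> nat list \<Rightarrow> real" where
  "sigma2_f th = wedge 2 2 (sigma_f th) (sigma_f th)"

definition eta_f :: "(nat \<Rightarrow> nat \<Rightarrow> real) \<Rightarrow> real \<Rightarrow> nat list \<Rightarrow> real" where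
  "eta_f th t = wedges (map (\<lambda>k. (\<lambda>i. cos t * th (2*k) i + sin t * th (2*k+1) i)) [0,1,2])"

definition eta0_f where "eta0_f th = eta_f th 0"
definition eta1_f where "eta1_f th = eta_f th (2*pi/3)"
definition eta2_f where "eta2_f th = eta_f th (-2*pi/3)"

definition gamma_f :: "(nat \<Rightarrow> nat \<Rightarrow> real) \<Rightarrow> nat list \<Rightarrow> real" where
  "gamma_f th js = 4/3 * (eta0_f th js + eta1_f th js + eta2_f th js)"

text \<open>Almost complex structure J of the structure: J e_{2k+1} = e_{2k+2},
J e_{2k+2} = -e_{2k+1} on the dual frame, acting on forms by (J alpha)(X,..) = alpha(JX,..);
on the coframe: J e^{2k+1} = - e^{2k+2}, J e^{2k+2} = e^{2k+1}.
J acts on decomposable forms factorwise, so J eta^t is the wedge of the J-images.\<close>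
definition J_eta_f :: "(nat \<Rightarrow> nat \<Rightarrow> real) \<Rightarrow> real \<Rightarrow> nat list \<Rightarrow> real" where
  "J_eta_f th t = wedges (map (\<lambda>k. (\<lambda>i. - cos t * th (2*k+1) i + sin t * th (2*k) i)) [0,1,2])"

definition gamma_hat_f :: "(nat \<Rightarrow> nat \<Rightarrow> real) \<Rightarrow> nat list \<Rightarrow> real" where
  "gamma_hat_f th js = 4/3 * (J_eta_f th 0 js + J_eta_f th (2*pi/3) js + J_eta_f th (-2*pi/3) js)"

definition wedge3 :: "(nat \<Rightarrow> nat \<Rightarrow> real) \<Rightarrow> nat \<Rightarrow> nat \<Rightarrow> nat \<Rightarrow> nat list \<Rightarrow> real" where
  "wedge3 th a b d = wedges [th a, th b, th d]"

text \<open>SO(3)-structure defined by the coframe th on the Lie algebra c has invariant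
intrinsic torsion with parameters l1..l4 (paper indices shifted: e^{235} = wedge3 th 1 2 4).\<close>
definition inv_torsion ::
  "(nat \<Rightarrow> nat \<Rightarrow> nat \<Rightarrow> real) \<Rightarrow> (nat \<Rightarrow> nat \<Rightarrow> real) \<Rightarrow> real \<Rightarrow> real \<Rightarrow> real \<Rightarrow> real \<Rightarrow> bool" where
  "inv_torsion c th l1 l2 l3 l4 \<longleftrightarrow>
     form_eq 4 (dform c (eta0_f th)) (\<lambda>js. - (1/2) * l4 * sigma2_f th js) \<and>
     form_eq 4 (dform c (eta1_f th))
        (\<lambda>js. (1/16) * (3* sqrt 3*l1 + 3*l2 + sqrt 3*l3 + l4) * sigma2_f th js) \<and>
     form_eq 4 (dform c (eta2_f th))
        (\<lambda>js. - (1/16) * (3* sqrt 3*l1 - 3*l2 + sqrt 3*l3 - l4) * sigma2_f th js) \<and>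
     form_eq 4 (dform c (gamma_hat_f th)) (\<lambda>js. (1/2) * (l3 - l1) * sigma2_f th js) \<and>
     form_eq 3 (dform c (sigma_f th))
        (\<lambda>js. (3/4) * (l1 - l3) * gamma_f th js + (3/4) * (l2 - l4) * gamma_hat_f th js
            + (1/4) * (l2 + 3*l4) * (wedge3 th 1 2 4 js + wedge3 th 0 3 4 js
                                      + wedge3 th 0 2 5 js + 3 * wedge3 th 1 3 5 js)
            + (1/4) * (3*l1 + l3) * (wedge3 th 1 3 4 js + wedge3 th 0 3 5 js
                                      + wedge3 th 1 2 5 js + 3 * wedge3 th 0 2 4 js))"

definition cubic :: "real \<Rightarrow> real \<Rightarrow> real \<Rightarrow> real \<Rightarrow> real \<Rightarrow> real \<Rightarrow> real" where
  "cubic l1 l2 l3 l4 u1 u2 = l1*u1^3 + l2*u1^2*u2 + l3*u1*u2^2 + l4*u2^3"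

definition half_flat :: "(nat \<Rightarrow> nat \<Rightarrow> nat \<Rightarrow> real) \<Rightarrow> (nat \<Rightarrow> nat \<Rightarrow> real) \<Rightarrow> bool" where
  "half_flat c th \<longleftrightarrow> (\<exists>l1 l2 l3 l4. inv_torsion c th l1 l2 l3 l4 \<and> l2 = l4)"

definition hermitian :: "(nat \<Rightarrow> nat \<Rightarrow> nat \<Rightarrow> real) \<Rightarrow> (nat \<Rightarrow> nat \<Rightarrow> real) \<Rightarrow> bool" where
  "hermitian c th \<longleftrightarrow> (\<exists>l1 l2 l3 l4. inv_torsion c th l1 l2 l3 l4 \<and> l2 = l4 \<and> l1 = l3)"

text \<open>The coframe of u itself (reference coframe e^1..e^6).\<close>
definition std_coframe :: "nat \<Rightarrow> nat \<Rightarrow> real" where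
  "std_coframe a i = (if a = i then 1 else 0)"

text \<open>Coframe of u g^{-1}: x e^1 + y e^2, z e^1 + w e^2, x e^3 + y e^4, ...\<close>
definition new_coframe :: "real \<Rightarrow> real \<Rightarrow> real \<Rightarrow> real \<Rightarrow> nat \<Rightarrow> nat \<Rightarrow> real" where
  "new_coframe x y z w a i =
     (if even a then x * std_coframe (a) i + y * std_coframe (a+1) i
      else z * std_coframe (a-1) i + w * std_coframe a i)"

end

theory Submission
  imports Defs
begin


lemma sign_tc: "permutation q \<Longrightarrow> sign (Transposition.transpose a b \<circ> q) = (if a = b then 1 else -1) * sign q"
  by (simp add: sign_compose permutation_swap_id sign_swap_id)
lemma perm_tc: "permutation q \<Longrightarrow> permutation (Transposition.transpose a b \<circ> q)"
  by (simp add: permutation_compose permutation_swap_id)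

lemma lt3: "{..<length [a,b,c]} = insert 0 (insert 1 (insert (2::nat) {}))" by auto
lemma lt2: "{..<length [a,b]} = insert 0 (insert (1::nat) {})" by auto

lemma wedges3: "wedges [f,g,h] js =
   f(js!0)*g(js!1)*h(js!2) - f(js!0)*g(js!2)*h(js!1) - f(js!1)*g(js!0)*h(js!2)
 + f(js!1)*g(js!2)*h(js!0) + f(js!2)*g(js!0)*h(js!1) - f(js!2)*g(js!1)*h(js!0)"
  unfolding wedges_def lt3
  by (simp add: sum_over_permutations_insert sign_tc perm_tc permutation_id
       sign_swap_id permutation_swap_id algebra_simps)

lemma wedges2: "wedges [f,g] js = f(js!0)*g(js!1) - f(js!1)*g(js!0)"
  unfolding wedges_def lt2
  by (simp add: sum_over_permutations_insert sign_tc perm_tc permutation_id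
       sign_swap_id permutation_swap_id algebra_simps)

definition "PP0 th = wedge3 th 0 2 4"
definition "PP1 th js = wedge3 th 1 2 4 js + wedge3 th 0 3 4 js + wedge3 th 0 2 5 js"
definition "PP2 th js = wedge3 th 1 3 4 js + wedge3 th 0 3 5 js + wedge3 th 1 2 5 js"
definition "PP3 th = wedge3 th 1 3 5"
definition "PhiF th s t js = s^3 * PP0 th js + s^2*t * PP1 th js + s*t^2 * PP2 th js + t^3 * PP3 th js"

lemma eta_expl: "eta_f th t = wedges [\<lambda>i. cos t*th 0 i + sin t*th 1 i, \<lambda>i. cos t*th 2 i + sin t*th 3 i, \<lambda>i. cos t * th 4 i + sin t* th 5 i]"
  unfolding eta_f_def by simp
lemma Jeta_expl: "J_eta_f th t = wedges [\<lambda>i. - cos t*th 1 i + sin t*th 0 i, \<lambda>i. - cos t*th 3 i + sin t*th 2 i, \<lambda>i. - cos t * th 5 i + sin t* th 4 i]"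
  unfolding J_eta_f_def by simp

lemma eta_Phi: "eta_f th t = PhiF th (cos t) (sin t)"
  unfolding eta_expl PhiF_def PP0_def PP1_def PP2_def PP3_def wedge3_def
  by (rule ext) (simp only: wedges3, simp add: algebra_simps power2_eq_square power3_eq_cube)

lemma Jeta_Phi: "J_eta_f th t = PhiF th (sin t) (- cos t)"
  unfolding Jeta_expl PhiF_def PP0_def PP1_def PP2_def PP3_def wedge3_def
  by (rule ext) (simp only: wedges3, simp add: algebra_simps power2_eq_square power3_eq_cube)

lemma cos120: "cos (2*pi/3) = -1/2" by (rule cos_120)
lemma sin120: "sin (2*pi/3) = sqrt 3/2" by (rule sin_120)
lemma cosm120: "cos (-2*pi/3) = -1/2" using cos120 by (metis cos_minus minus_divide_left mult_minus_left)
lemma sinm120: "sin (-2*pi/3) = -sqrt 3/2" using sin120 by (metis sin_minus minus_divide_left mult_minus_left)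

lemma s3: "sqrt 3 * sqrt 3 = (3::real)" by simp

lemma gamma_P: "gamma_f th js = PP0 th js - PP2 th js"
  unfolding gamma_f_def eta0_f_def eta1_f_def eta2_f_def eta_Phi cos120 sin120 cosm120 sinm120
  by (simp add: PhiF_def power2_eq_square power3_eq_cube algebra_simps)

lemma gammahat_P: "gamma_hat_f th js = PP1 th js - PP3 th js"
  unfolding gamma_hat_f_def Jeta_Phi cos120 sin120 cosm120 sinm120
  by (simp add: PhiF_def power2_eq_square power3_eq_cube algebra_simps)



lemma key:
  fixes D0 D1 D2 D3 S l1 l2 l3 l4 :: real
  defines "r \<equiv> sqrt 3"
  shows "(D0 = -(1/2)*l4*S \<and>
   (-1/2)^3*D0 + (-1/2)^2*(r/2)*D1 + (-1/2)*(r/2)^2*D2 + (r/2)^3*D3 = (1/16)*(3*r*l1 + 3*l2 + r*l3 + l4)*S \<and>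
   (-1/2)^3*D0 + (-1/2)^2*(-r/2)*D1 + (-1/2)*(-r/2)^2*D2 + (-r/2)^3*D3 = -(1/16)*(3*r*l1 - 3*l2 + r*l3 - l4)*S \<and>
   D1 - D3 = (1/2)*(l3-l1)*S)
   \<longleftrightarrow> (D0 = -(1/2)*l4*S \<and> D1 = (1/2)*l3*S \<and> D2 = -(1/2)*l2*S \<and> D3 = (1/2)*l1*S)"
proof -
  have rr: "r*r = 3" unfolding r_def by simp
  have rp: "r > 0" unfolding r_def by simp
  have p2: "(r/2)^2 = 3/4" "(-r/2)^2 = 3/4" using rr by (simp_all add: power2_eq_square)
  have p3: "(r/2)^3 = 3*r/8" "(-r/2)^3 = -3*r/8" using rr by (simp_all add: power3_eq_cube)
  have q: "(-1/2::real)^3 = -1/8" "(-1/2::real)^2 = 1/4" "(1/2::real)^3 = 1/8" "(1/2::real)^2 = 1/4" by (simp_all add: power2_eq_square power3_eq_cube)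
  show ?thesis
  proof
    assume H: "D0 = -(1/2)*l4*S \<and>
   (-1/2)^3*D0 + (-1/2)^2*(r/2)*D1 + (-1/2)*(r/2)^2*D2 + (r/2)^3*D3 = (1/16)*(3*r*l1 + 3*l2 + r*l3 + l4)*S \<and>
   (-1/2)^3*D0 + (-1/2)^2*(-r/2)*D1 + (-1/2)*(-r/2)^2*D2 + (-r/2)^3*D3 = -(1/16)*(3*r*l1 - 3*l2 + r*l3 - l4)*S \<and>
   D1 - D3 = (1/2)*(l3-l1)*S"
    then have h1: "D0 = -(1/2)*l4*S" and h2: "-D0/8 + r*D1/8 - 3*D2/8 + 3*r*D3/8 = (1/16)*(3*r*l1 + 3*l2 + r*l3 + l4)*S"
      and h3: "-D0/8 - r*D1/8 - 3*D2/8 - 3*r*D3/8 = -(1/16)*(3*r*l1 - 3*l2 + r*l3 - l4)*S"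
      and h4: "D1 - D3 = (1/2)*(l3-l1)*S" by (simp_all add: p2 p3 q algebra_simps)
    have d2: "D2 = -(1/2)*l2*S" using h1 h2 h3 by (simp add: algebra_simps) 
    have "r*(D1 + 3*D3 - (3*l1+l3)/2*S) = 0" using h2 h3 by (simp add: algebra_simps)
    then have "D1 + 3*D3 = (3*l1+l3)/2*S" using rp by simp
    then show "D0 = -(1/2)*l4*S \<and> D1 = (1/2)*l3*S \<and> D2 = -(1/2)*l2*S \<and> D3 = (1/2)*l1*S"
      using h1 d2 h4 by (simp add: algebra_simps)
  next
    assume "D0 = -(1/2)*l4*S \<and> D1 = (1/2)*l3*S \<and> D2 = -(1/2)*l2*S \<and> D3 = (1/2)*l1*S"
    then have e: "D0 = -(1/2)*l4*S" "D1 = (1/2)*l3*S" "D2 = -(1/2)*l2*S" "D3 = (1/2)*l1*S" by auto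
    show "D0 = -(1/2)*l4*S \<and>
   (-1/2)^3*D0 + (-1/2)^2*(r/2)*D1 + (-1/2)*(r/2)^2*D2 + (r/2)^3*D3 = (1/16)*(3*r*l1 + 3*l2 + r*l3 + l4)*S \<and>
   (-1/2)^3*D0 + (-1/2)^2*(-r/2)*D1 + (-1/2)*(-r/2)^2*D2 + (-r/2)^3*D3 = -(1/16)*(3*r*l1 - 3*l2 + r*l3 - l4)*S \<and>
   D1 - D3 = (1/2)*(l3-l1)*S" by (simp only: e) (simp add: p2 p3 q algebra_simps)
  qed
qed

lemma dform_Phi: "dform c (PhiF th s t) js = s^3*dform c (PP0 th) js + s^2*t*dform c (PP1 th) js + s*t^2*dform c (PP2 th) js + t^3*dform c (PP3 th) js"
  unfolding dform_def PhiF_def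
  by (simp add: sum.distrib sum_distrib_left algebra_simps)

lemma dform_diff: "dform c (\<lambda>js. \<alpha> js - \<beta> js) js = dform c \<alpha> js - dform c \<beta> js"
  unfolding dform_def
  by (simp add: sum_subtractf right_diff_distrib)

lemma dform_scale: "dform c (\<lambda>js. a * \<alpha> js) js = a * dform c \<alpha> js"
  unfolding dform_def
  by (simp add: sum_distrib_left algebra_simps)

lemma merge4: "((\<forall>x. P x \<longrightarrow> A x) \<and> (\<forall>x. P x \<longrightarrow> B x) \<and> (\<forall>x. P x \<longrightarrow> C x) \<and> (\<forall>x. P x \<longrightarrow> E x) \<and> R)
   \<longleftrightarrow> ((\<forall>x. P x \<longrightarrow> (A x \<and> B x \<and> C x \<and> E x)) \<and> R)" by blast

lemma sigma_rhs: "(\<lambda>js. (3/4) * (l1 - l3) * gamma_f th js + (3/4) * (l2 - l4) * gamma_hat_f th js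
            + (1/4) * (l2 + 3*l4) * (wedge3 th 1 2 4 js + wedge3 th 0 3 4 js
                                      + wedge3 th 0 2 5 js + 3 * wedge3 th 1 3 5 js)
            + (1/4) * (3*l1 + l3) * (wedge3 th 1 3 4 js + wedge3 th 0 3 5 js
                                      + wedge3 th 1 2 5 js + 3 * wedge3 th 0 2 4 js))
   = (\<lambda>js. 3*l1*PP0 th js + l2*PP1 th js + l3*PP2 th js + 3*l4*PP3 th js)"
  apply (rule ext)
  apply (simp only: gamma_P gammahat_P PP0_def PP1_def PP2_def PP3_def)
  apply (simp add: field_simps)
  done

lemma char: "inv_torsion c th l1 l2 l3 l4 \<longleftrightarrow>
   (\<forall>js. length js = 4 \<and> set js \<subseteq> {..<6} \<longrightarrow>
      dform c (PP0 th) js = -(1/2)*l4 * sigma2_f th js \<and>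
      dform c (PP1 th) js = (1/2)*l3 * sigma2_f th js \<and>
      dform c (PP2 th) js = -(1/2)*l2 * sigma2_f th js \<and>
      dform c (PP3 th) js = (1/2)*l1 * sigma2_f th js) \<and>
   form_eq 3 (dform c (sigma_f th)) (\<lambda>js. 3*l1*PP0 th js + l2*PP1 th js + l3*PP2 th js + 3*l4*PP3 th js)"
proof -
  have e0: "eta0_f th = PhiF th 1 0" unfolding eta0_f_def eta_Phi by simp
  have e1: "eta1_f th = PhiF th (-1/2) (sqrt 3/2)" unfolding eta1_f_def eta_Phi cos120 sin120 by simp
  have e2: "eta2_f th = PhiF th (-1/2) (-sqrt 3/2)" unfolding eta2_f_def eta_Phi cosm120 sinm120 by simp
  have g: "gamma_hat_f th = (\<lambda>js. PP1 th js - PP3 th js)" by (rule ext) (rule gammahat_P)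
  have d0: "\<And>js. dform c (eta0_f th) js = dform c (PP0 th) js" unfolding e0 dform_Phi by simp
  have d1: "\<And>js. dform c (eta1_f th) js = (-1/2)^3*dform c (PP0 th) js + (-1/2)^2*(sqrt 3/2)*dform c (PP1 th) js + (-1/2)*(sqrt 3/2)^2*dform c (PP2 th) js + (sqrt 3/2)^3*dform c (PP3 th) js"
    unfolding e1 dform_Phi by simp
  have d2: "\<And>js. dform c (eta2_f th) js = (-1/2)^3*dform c (PP0 th) js + (-1/2)^2*(-sqrt 3/2)*dform c (PP1 th) js + (-1/2)*(-sqrt 3/2)^2*dform c (PP2 th) js + (-sqrt 3/2)^3*dform c (PP3 th) js"
    unfolding e2 dform_Phi by simp
  have dg: "\<And>js. dform c (gamma_hat_f th) js = dform c (PP1 th) js - dform c (PP3 th) js"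
    unfolding g dform_diff by simp
  show ?thesis
    unfolding inv_torsion_def sigma_rhs
    by (simp only: form_eq_def d0 d1 d2 dg merge4 key)
qed



lemma nc_eval:
  "new_coframe x y z w 0 = (\<lambda>i. x * std_coframe 0 i + y * std_coframe 1 i)"
  "new_coframe x y z w 1 = (\<lambda>i. z * std_coframe 0 i + w * std_coframe 1 i)"
  "new_coframe x y z w 2 = (\<lambda>i. x * std_coframe 2 i + y * std_coframe 3 i)"
  "new_coframe x y z w 3 = (\<lambda>i. z * std_coframe 2 i + w * std_coframe 3 i)"
  "new_coframe x y z w 4 = (\<lambda>i. x * std_coframe 4 i + y * std_coframe 5 i)"
  "new_coframe x y z w 5 = (\<lambda>i. z * std_coframe 4 i + w * std_coframe 5 i)"
  by (auto simp: new_coframe_def fun_eq_iff)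

lemma sigma_new: "sigma_f (new_coframe x y z w) js = (x * w - y * z) * sigma_f std_coframe js"
  unfolding sigma_f_def nc_eval wedges2 by (simp add: algebra_simps)

lemma PP0_new: "PP0 (new_coframe x y z w) js = x^3 * PP0 std_coframe js + x^2 * y * PP1 std_coframe js + x * y^2 * PP2 std_coframe js + y^3 * PP3 std_coframe js"
  unfolding PP0_def PP1_def PP2_def PP3_def wedge3_def nc_eval wedges3
  by (simp add: algebra_simps power2_eq_square power3_eq_cube)

lemma PP3_new: "PP3 (new_coframe x y z w) js = z^3 * PP0 std_coframe js + z^2 * w * PP1 std_coframe js + z * w^2 * PP2 std_coframe js + w^3 * PP3 std_coframe js"
  unfolding PP0_def PP1_def PP2_def PP3_def wedge3_def nc_eval wedges3
  by (simp add: algebra_simps power2_eq_square power3_eq_cube)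

lemma PP1_new: "PP1 (new_coframe x y z w) js = 3 * x^2 * z * PP0 std_coframe js + (x^2 * w+2 * x * y * z) * PP1 std_coframe js + (2 * x * y * w + y^2 * z) * PP2 std_coframe js + 3 * y^2 * w * PP3 std_coframe js"
  unfolding PP0_def PP1_def PP2_def PP3_def wedge3_def nc_eval wedges3
  by (simp add: algebra_simps power2_eq_square power3_eq_cube)

lemma PP2_new: "PP2 (new_coframe x y z w) js = 3 * x * z^2 * PP0 std_coframe js + (2 * x * z * w + z^2 * y) * PP1 std_coframe js + (x * w^2 + 2 * y * z * w) * PP2 std_coframe js + 3 * y * w^2 * PP3 std_coframe js"
  unfolding PP0_def PP1_def PP2_def PP3_def wedge3_def nc_eval wedges3
  by (simp add: algebra_simps power2_eq_square power3_eq_cube)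

lemma sigma2_new: "sigma2_f (new_coframe x y z w) js = (x * w - y * z)^2 * sigma2_f std_coframe js"
proof -
  have e: "sigma_f (new_coframe x y z w) = (\<lambda>js. (x * w - y * z) * sigma_f std_coframe js)"
    by (rule ext) (rule sigma_new)
  show ?thesis unfolding sigma2_f_def wedge_def e
    by (simp add: sum_distrib_left algebra_simps power2_eq_square)
qed

lemma lt4: "{..<2+2::nat} = insert 0 (insert 1 (insert 2 (insert 3 {})))" by auto

lemma sigma2_std: "sigma2_f std_coframe [0,1,2,3] = 2"
  unfolding sigma2_f_def wedge_def lt4
  by (simp add: sum_over_permutations_insert sign_tc perm_tc permutation_id
       sign_swap_id permutation_swap_id upt_conv_Cons sigma_f_def wedges2 std_coframe_def)

lemma dform_lin4: "dform c (\<lambda>js. a * A js + b * B js + e * C js + f * E js) js = a * dform c A js + b * dform c B js + e * dform c C js + f * dform c E js"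
  unfolding dform_def by (simp add: sum.distrib sum_distrib_left algebra_simps)

lemma deriv1: "deriv (\<lambda>s. cubic l1 l2 l3 l4 s u) v = 3 * l1 * v^2 + 2 * l2 * v * u + l3 * u^2"
  unfolding cubic_def
  by (rule DERIV_imp_deriv) (auto intro!: derivative_eq_intros simp: power2_eq_square algebra_simps)

lemma deriv2: "deriv (\<lambda>s. cubic l1 l2 l3 l4 v s) u = l2 * v^2 + 2 * l3 * v * u + 3 * l4 * u^2"
  unfolding cubic_def
  by (rule DERIV_imp_deriv) (auto intro!: derivative_eq_intros simp: power2_eq_square algebra_simps)

theorem lemma4p3:
  fixes c :: "nat \<Rightarrow> nat \<Rightarrow> nat \<Rightarrow> real"
    and l1 l2 l3 l4 x y z w :: real
  defines "p \<equiv> cubic l1 l2 l3 l4"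
  assumes lie: "lie_algebra6 c"
    and tors: "inv_torsion c std_coframe l1 l2 l3 l4"
    and gl2: "x * w - y * z \<noteq> 0"
  shows "(half_flat c (new_coframe x y z w) \<longleftrightarrow>
           p y (-x) - y * deriv (\<lambda>s. p s (-z)) w + x * deriv (\<lambda>s. p w s) (-z) = 0)
       \<and> (hermitian c (new_coframe x y z w) \<longleftrightarrow>
           half_flat c (new_coframe x y z w) \<and>
           p w (-z) - w * deriv (\<lambda>s. p s (-x)) y + z * deriv (\<lambda>s. p y s) (-x) = 0)"
proof -
  define D where "D = x * w - y * z"
  have D0: "D \<noteq> 0" using gl2 D_def by simp
  define th where "th = new_coframe x y z w"
  define N1 where "N1 = l1 * w^3 - l2 * w^2 * z + l3 * w * z^2 - l4 * z^3"
  define N2 where "N2 = -3 * w^2 * y * l1 + (w^2 * x+2 * w * y * z) * l2 + (-2 * w * x * z-y * z^2) * l3 + 3 * x * z^2 * l4"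
  define N3 where "N3 = 3 * w * y^2 * l1 + (-2 * w * x * y-y^2 * z) * l2 + (w * x^2+2 * x * y * z) * l3 - 3 * x^2 * z * l4"
  define N4 where "N4 = -l1 * y^3 + l2 * y^2 * x - l3 * y * x^2 + l4 * x^3"
  define L1 where "L1 = N1 / D^2"
  define L2 where "L2 = N2 / D^2"
  define L3 where "L3 = N3 / D^2"
  define L4 where "L4 = N4 / D^2"
  from tors have T1: "\<And>js. length js = 4 \<and> set js \<subseteq> {..<6} \<Longrightarrow>
      dform c (PP0 std_coframe) js = -(1/2) * l4 * sigma2_f std_coframe js \<and>
      dform c (PP1 std_coframe) js = (1/2) * l3 * sigma2_f std_coframe js \<and>
      dform c (PP2 std_coframe) js = -(1/2) * l2 * sigma2_f std_coframe js \<and>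
      dform c (PP3 std_coframe) js = (1/2) * l1 * sigma2_f std_coframe js"
    and T2: "form_eq 3 (dform c (sigma_f std_coframe)) (\<lambda>js. 3 * l1 * PP0 std_coframe js + l2 * PP1 std_coframe js + l3 * PP2 std_coframe js + 3 * l4 * PP3 std_coframe js)"
    unfolding char by auto
  have n0: "PP0 th = (\<lambda>js. x^3 * PP0 std_coframe js + x^2 * y * PP1 std_coframe js + x * y^2 * PP2 std_coframe js + y^3 * PP3 std_coframe js)"
    unfolding th_def by (rule ext) (rule PP0_new)
  have n1: "PP1 th = (\<lambda>js. 3 * x^2 * z * PP0 std_coframe js + (x^2 * w+2 * x * y * z) * PP1 std_coframe js + (2 * x * y * w + y^2 * z) * PP2 std_coframe js + 3 * y^2 * w * PP3 std_coframe js)"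
    unfolding th_def by (rule ext) (rule PP1_new)
  have n2: "PP2 th = (\<lambda>js. 3 * x * z^2 * PP0 std_coframe js + (2 * x * z * w + z^2 * y) * PP1 std_coframe js + (x * w^2 + 2 * y * z * w) * PP2 std_coframe js + 3 * y * w^2 * PP3 std_coframe js)"
    unfolding th_def by (rule ext) (rule PP2_new)
  have n3: "PP3 th = (\<lambda>js. z^3 * PP0 std_coframe js + z^2 * w * PP1 std_coframe js + z * w^2 * PP2 std_coframe js + w^3 * PP3 std_coframe js)"
    unfolding th_def by (rule ext) (rule PP3_new)
  have ns: "sigma_f th = (\<lambda>js. D * sigma_f std_coframe js)"
    unfolding th_def D_def by (rule ext) (rule sigma_new)
  have ns2: "\<And>js. sigma2_f th js = D^2 * sigma2_f std_coframe js"
    unfolding th_def D_def by (rule sigma2_new)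
  have newt: "inv_torsion c th L1 L2 L3 L4"
    unfolding char
  proof (rule conjI, intro allI impI)
    fix js :: "nat list" assume V: "length js = 4 \<and> set js \<subseteq> {..<6}"
    note t = T1[OF V]
    have t0: "dform c (PP0 std_coframe) js = -(1/2) * l4 * sigma2_f std_coframe js" using t by blast
    have t1: "dform c (PP1 std_coframe) js = (1/2) * l3 * sigma2_f std_coframe js" using t by blast
    have t2: "dform c (PP2 std_coframe) js = -(1/2) * l2 * sigma2_f std_coframe js" using t by blast
    have t3: "dform c (PP3 std_coframe) js = (1/2) * l1 * sigma2_f std_coframe js" using t by blast
    have e0: "dform c (PP0 th) js = -(1/2) * L4 * sigma2_f th js"
      unfolding n0 dform_lin4 ns2 t0 t1 t2 t3 using D0
      by (simp add: L4_def N4_def field_simps power2_eq_square power3_eq_cube)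
    have e1: "dform c (PP1 th) js = (1/2) * L3 * sigma2_f th js"
      unfolding n1 dform_lin4 ns2 t0 t1 t2 t3 using D0
      by (simp add: L3_def N3_def field_simps power2_eq_square power3_eq_cube)
    have e2: "dform c (PP2 th) js = -(1/2) * L2 * sigma2_f th js"
      unfolding n2 dform_lin4 ns2 t0 t1 t2 t3 using D0
      by (simp add: L2_def N2_def field_simps power2_eq_square power3_eq_cube)
    have e3: "dform c (PP3 th) js = (1/2) * L1 * sigma2_f th js"
      unfolding n3 dform_lin4 ns2 t0 t1 t2 t3 using D0
      by (simp add: L1_def N1_def field_simps power2_eq_square power3_eq_cube)
    show "dform c (PP0 th) js = -(1/2) * L4 * sigma2_f th js \<and>
      dform c (PP1 th) js = (1/2) * L3 * sigma2_f th js \<and>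
      dform c (PP2 th) js = -(1/2) * L2 * sigma2_f th js \<and>
      dform c (PP3 th) js = (1/2) * L1 * sigma2_f th js" using e0 e1 e2 e3 by blast
  next
    show "form_eq 3 (dform c (sigma_f th)) (\<lambda>js. 3 * L1 * PP0 th js + L2 * PP1 th js + L3 * PP2 th js + 3 * L4 * PP3 th js)"
      unfolding form_eq_def
    proof (intro allI impI)
      fix js :: "nat list" assume V: "length js = 3 \<and> set js \<subseteq> {..<6}"
      have t: "dform c (sigma_f std_coframe) js = 3 * l1 * PP0 std_coframe js + l2 * PP1 std_coframe js + l3 * PP2 std_coframe js + 3 * l4 * PP3 std_coframe js"
        using T2 V unfolding form_eq_def by blast
      define A0 where "A0 = PP0 std_coframe js"
      define A1 where "A1 = PP1 std_coframe js"
      define A2 where "A2 = PP2 std_coframe js"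
      define A3 where "A3 = PP3 std_coframe js"
      have poly: "(x * w - y * z)^3 * (3 * l1 * A0 + l2 * A1 + l3 * A2 + 3 * l4 * A3) =
         3 * N1 * (x^3 * A0 + x^2 * y * A1 + x * y^2 * A2 + y^3 * A3)
       + N2 * (3 * x^2 * z * A0 + (x^2 * w+2 * x * y * z) * A1 + (2 * x * y * w + y^2 * z) * A2 + 3 * y^2 * w * A3)
       + N3 * (3 * x * z^2 * A0 + (2 * x * z * w + z^2 * y) * A1 + (x * w^2 + 2 * y * z * w) * A2 + 3 * y * w^2 * A3)
       + 3 * N4 * (z^3 * A0 + z^2 * w * A1 + z * w^2 * A2 + w^3 * A3)"
        unfolding N1_def N2_def N3_def N4_def
        by (simp add: algebra_simps power2_eq_square power3_eq_cube)
      have poly': "D^3 * (3 * l1 * A0 + l2 * A1 + l3 * A2 + 3 * l4 * A3) =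
         3 * N1 * (x^3 * A0 + x^2 * y * A1 + x * y^2 * A2 + y^3 * A3)
       + N2 * (3 * x^2 * z * A0 + (x^2 * w+2 * x * y * z) * A1 + (2 * x * y * w + y^2 * z) * A2 + 3 * y^2 * w * A3)
       + N3 * (3 * x * z^2 * A0 + (2 * x * z * w + z^2 * y) * A1 + (x * w^2 + 2 * y * z * w) * A2 + 3 * y * w^2 * A3)
       + 3 * N4 * (z^3 * A0 + z^2 * w * A1 + z * w^2 * A2 + w^3 * A3)"
        using poly unfolding D_def .
      show "dform c (sigma_f th) js = 3 * L1 * PP0 th js + L2 * PP1 th js + L3 * PP2 th js + 3 * L4 * PP3 th js"
        unfolding ns dform_scale t n0 n1 n2 n3 L1_def L2_def L3_def L4_def
        unfolding A0_def[symmetric] A1_def[symmetric] A2_def[symmetric] A3_def[symmetric]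
        using D0 poly' by (simp add: field_simps power2_eq_square power3_eq_cube)
    qed
  qed
  have uniq: "m1 = L1 \<and> m2 = L2 \<and> m3 = L3 \<and> m4 = L4" if H: "inv_torsion c th m1 m2 m3 m4" for m1 m2 m3 m4
  proof -
    define js0 :: "nat list" where "js0 = [0,1,2,3]"
    have V: "length js0 = 4 \<and> set js0 \<subseteq> {..<6}" unfolding js0_def by auto
    have S: "sigma2_f th js0 \<noteq> 0" unfolding ns2 js0_def sigma2_std using D0 by simp
    from H have A: "dform c (PP0 th) js0 = -(1/2) * m4 * sigma2_f th js0 \<and>
      dform c (PP1 th) js0 = (1/2) * m3 * sigma2_f th js0 \<and>
      dform c (PP2 th) js0 = -(1/2) * m2 * sigma2_f th js0 \<and>
      dform c (PP3 th) js0 = (1/2) * m1 * sigma2_f th js0" unfolding char using V by blast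
    from newt have B: "dform c (PP0 th) js0 = -(1/2) * L4 * sigma2_f th js0 \<and>
      dform c (PP1 th) js0 = (1/2) * L3 * sigma2_f th js0 \<and>
      dform c (PP2 th) js0 = -(1/2) * L2 * sigma2_f th js0 \<and>
      dform c (PP3 th) js0 = (1/2) * L1 * sigma2_f th js0" unfolding char using V by blast
    from A B S show ?thesis by auto
  qed
  have hf: "half_flat c th \<longleftrightarrow> L2 = L4"
    unfolding half_flat_def using newt uniq by metis
  have he: "hermitian c th \<longleftrightarrow> L2 = L4 \<and> L1 = L3"
    unfolding hermitian_def using newt uniq by metis
  have c1: "p y (-x) - y * deriv (\<lambda>s. p s (-z)) w + x * deriv (\<lambda>s. p w s) (-z) = (L2 - L4) * D^2"
    unfolding p_def deriv1 deriv2 using D0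
    by (simp add: L2_def L4_def N2_def N4_def cubic_def field_simps power2_eq_square power3_eq_cube)
  have c2: "p w (-z) - w * deriv (\<lambda>s. p s (-x)) y + z * deriv (\<lambda>s. p y s) (-x) = (L1 - L3) * D^2"
    unfolding p_def deriv1 deriv2 using D0
    by (simp add: L1_def L3_def N1_def N3_def cubic_def field_simps power2_eq_square power3_eq_cube)
  show ?thesis
    unfolding th_def[symmetric] hf he c1 c2 using D0 by auto
qed


end
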